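(* Consider $p\ge 1$ machines, machine $v$ having nonnegative real parameters $k^A_v,k^B_v,t^A_v,t^B_v$, and a real bound $L$. For $1\le v\le p$ and an integer $a\ge 0$, let $b_v(a)=\{b\in\mathbb{Z}_{\ge 0} : f_v(a,b)\le L\}$ and $$dp(v,a)=\bigcup_{\substack{x_1+\dots+x_v=a\\ x_1,\dots,x_v\in\mathbb{Z}_{\ge 0}}}\big(b_1(x_1)+\dots+b_v(x_v)\big),$$ where $+$ denotes the sumset $X+Y=\{x+y : x\in X, y\in Y\}$. Then for every $1\le v\le p$ and every integer $a\ge 0$, the set $dp(v,a)$ is an interval of integers, i.e. if $c_1<c_2<c_3$ are integers with $c_1,c_3\in dp(v,a)$ then $c_2\in dp(v,a)$.
   Context: Each machine $v$ processes jobs of two types, A and B, in batches. A schedule of machine $v$ for the task-combination $(a,b)$ is a finite sequence of batches, each a nonempty group of jobs of a single type, with consecutive batches of different types, processing exactly $a$ A-jobs and $b$ B-jobs. An A-batch of $x$ jobs takes $t^A_v+k^A_v x^2$ time units and a B-batch of $x$ jobs takes $t^B_v+k^B_v x^2$ time units on machine $v$; the time of a schedule is the sum of its batch times (empty schedule: time $0$). $f_v(a,b)$ is the minimum time over all schedules of machine $v$ for $(a,b)$. Thus $dp(v,a)$ is the set of $b$ such that machines $1,\dots,v$ together can process $a$ A-jobs and $b$ B-jobs with each machine finishing within $L$ time units. *)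

theory Defs
  imports Complex_Main
begin

datatype jobtype = TA | TB

type_synonym batch = "jobtype \<times> nat"

definition is_schedule :: "nat \<Rightarrow> nat \<Rightarrow> batch list \<Rightarrow> bool" where
  "is_schedule a b s \<longleftrightarrow>
     (\<forall>bt \<in> set s. snd bt > 0) \<and>
     (\<forall>i. Suc i < length s \<longrightarrow> fst (s ! i) \<noteq> fst (s ! Suc i)) \<and>
     sum_list (map snd (filter (\<lambda>bt. fst bt = TA) s)) = a \<and>
     sum_list (map snd (filter (\<lambda>bt. fst bt = TB) s)) = b"

definition batch_time ::
  "(nat \<Rightarrow> real) \<Rightarrow> (nat \<Rightarrow> real) \<Rightarrow> (nat \<Rightarrow> real) \<Rightarrow> (nat \<Rightarrow> real) \<Rightarrow> nat \<Rightarrow> batch \<Rightarrow> real" where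
  "batch_time kA kB tA tB v bt =
     (case bt of (TA, x) \<Rightarrow> tA v + kA v * (real x)^2
               | (TB, x) \<Rightarrow> tB v + kB v * (real x)^2)"

definition sched_time ::
  "(nat \<Rightarrow> real) \<Rightarrow> (nat \<Rightarrow> real) \<Rightarrow> (nat \<Rightarrow> real) \<Rightarrow> (nat \<Rightarrow> real) \<Rightarrow> nat \<Rightarrow> batch list \<Rightarrow> real" where
  "sched_time kA kB tA tB v s = sum_list (map (batch_time kA kB tA tB v) s)"

definition fmin ::
  "(nat \<Rightarrow> real) \<Rightarrow> (nat \<Rightarrow> real) \<Rightarrow> (nat \<Rightarrow> real) \<Rightarrow> (nat \<Rightarrow> real) \<Rightarrow> nat \<Rightarrow> nat \<Rightarrow> nat \<Rightarrow> real" where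
  "fmin kA kB tA tB v a b = Min (sched_time kA kB tA tB v ` {s. is_schedule a b s})"

definition bset ::
  "(nat \<Rightarrow> real) \<Rightarrow> (nat \<Rightarrow> real) \<Rightarrow> (nat \<Rightarrow> real) \<Rightarrow> (nat \<Rightarrow> real) \<Rightarrow> real \<Rightarrow> nat \<Rightarrow> nat \<Rightarrow> nat set" where
  "bset kA kB tA tB L v a = {b. fmin kA kB tA tB v a b \<le> L}"

definition dp ::
  "(nat \<Rightarrow> real) \<Rightarrow> (nat \<Rightarrow> real) \<Rightarrow> (nat \<Rightarrow> real) \<Rightarrow> (nat \<Rightarrow> real) \<Rightarrow> real \<Rightarrow> nat \<Rightarrow> nat \<Rightarrow> nat set" where
  "dp kA kB tA tB L v a =
     (\<Union>x \<in> {x :: nat \<Rightarrow> nat. (\<Sum>i=1..v. x i) = a}.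
        {(\<Sum>i=1..v. y i) | y :: nat \<Rightarrow> nat. \<forall>i\<in>{1..v}. y i \<in> bset kA kB tA tB L i (x i)})"

end

theory Submission
  imports Defs
begin

fun altl :: "jobtype list \<Rightarrow> bool" where
  "altl (x # y # zs) = (x \<noteq> y \<and> altl (y # zs))"
| "altl _ = True"

lemma altl_Cons: "altl (x # l) \<longleftrightarrow> (l = [] \<or> (x \<noteq> hd l \<and> altl l))"
  by (cases l) auto

lemma altl_iff: "(\<forall>i. Suc i < length l \<longrightarrow> l ! i \<noteq> l ! Suc i) \<longleftrightarrow> altl l"
proof (induction l rule: altl.induct)
  case (1 x y zs)
  have "(\<forall>i. Suc i < length (x # y # zs) \<longrightarrow> (x # y # zs) ! i \<noteq> (x # y # zs) ! Suc i)
        \<longleftrightarrow> (x \<noteq> y \<and> (\<forall>j. Suc j < length (y # zs) \<longrightarrow> (y # zs) ! j \<noteq> (y # zs) ! Suc j))"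
  proof
    assume H: "\<forall>i. Suc i < length (x # y # zs) \<longrightarrow> (x # y # zs) ! i \<noteq> (x # y # zs) ! Suc i"
    show "x \<noteq> y \<and> (\<forall>j. Suc j < length (y # zs) \<longrightarrow> (y # zs) ! j \<noteq> (y # zs) ! Suc j)"
    proof
      show "x \<noteq> y" using H[rule_format, of 0] by simp
      show "\<forall>j. Suc j < length (y # zs) \<longrightarrow> (y # zs) ! j \<noteq> (y # zs) ! Suc j"
        using H[rule_format, of "Suc _"] by simp
    qed
  next
    assume H: "x \<noteq> y \<and> (\<forall>j. Suc j < length (y # zs) \<longrightarrow> (y # zs) ! j \<noteq> (y # zs) ! Suc j)"
    show "\<forall>i. Suc i < length (x # y # zs) \<longrightarrow> (x # y # zs) ! i \<noteq> (x # y # zs) ! Suc i"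
    proof (intro allI impI)
      fix i assume "Suc i < length (x # y # zs)"
      then show "(x # y # zs) ! i \<noteq> (x # y # zs) ! Suc i"
        using H by (cases i) auto
    qed
  qed
  then show ?case using 1 by simp
next
  case "2_1" then show ?case by simp
next
  case "2_2" then show ?case by simp
qed

definition xsof :: "jobtype \<Rightarrow> batch list \<Rightarrow> nat list" where
  "xsof \<tau> s = map snd (filter (\<lambda>bt. fst bt = \<tau>) s)"

lemma is_schedule_iff:
  "is_schedule a b s \<longleftrightarrow> (\<forall>bt\<in>set s. 0 < snd bt) \<and> altl (map fst s) \<and>
     sum_list (xsof TA s) = a \<and> sum_list (xsof TB s) = b"
proof -
  have "(\<forall>i. Suc i < length s \<longrightarrow> fst (s ! i) \<noteq> fst (s ! Suc i)) \<longleftrightarrow> altl (map fst s)"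
    using altl_iff[of "map fst s"] by simp
  then show ?thesis unfolding is_schedule_def xsof_def by simp
qed

lemma jt_cases: "(x::jobtype) \<noteq> TA \<longleftrightarrow> x = TB"
  by (cases x) auto

lemma sum_split:
  "sum_list (map (f::batch \<Rightarrow> 'b::comm_monoid_add) s) =
     sum_list (map f (filter (\<lambda>bt. fst bt = TA) s)) + sum_list (map f (filter (\<lambda>bt. fst bt = TB) s))"
proof (induction s)
  case Nil then show ?case by simp
next
  case (Cons bt s)
  then show ?case by (cases "fst bt") (auto simp: algebra_simps)
qed

lemma len_split: "length s = length (xsof TA s) + length (xsof TB s)"
  unfolding xsof_def by (induction s) (auto simp: jt_cases)

lemma len_le_sum: "\<forall>x\<in>set xs. 0 < (x::nat) \<Longrightarrow> length xs \<le> sum_list xs"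
  by (induction xs) auto

lemma sum_sq_bound:
  fixes xs :: "nat list" and q :: nat
  shows "sum_list (map (\<lambda>x. real x ^ 2) xs) \<ge>
         (2 * real q + 1) * real (sum_list xs) - real (length xs) * (real q * (real q + 1))"
proof (induction xs)
  case Nil then show ?case by simp
next
  case (Cons x xs)
  have "(real x - real q) * (real x - real q - 1) \<ge> 0"
  proof (cases "x \<le> q")
    case True then show ?thesis by (intro mult_nonpos_nonpos) auto
  next
    case False then have "real x \<ge> real q + 1" by simp
    then show ?thesis by (intro mult_nonneg_nonneg) auto
  qed
  then have "real x ^ 2 \<ge> (2 * real q + 1) * real x - real q * (real q + 1)"
    by (simp add: algebra_simps power2_eq_square)
  then show ?case using Cons by (simp add: algebra_simps)
qed


lemma altl_tl: "altl (x # l) \<Longrightarrow> altl l"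
  by (cases l) auto

lemma altl_prefix: "altl (l1 @ l2) \<Longrightarrow> altl l1"
proof (induction l1 rule: altl.induct)
  case (1 x y zs) then show ?case by simp
qed auto

lemma nb_diff:
  assumes "altl (map fst s)" "s \<noteq> []"
  shows "int (length (xsof TA s)) - int (length (xsof TB s)) =
     (if fst (hd s) = TA then 1 else 0) + (if fst (last s) = TA then 1 else 0) - 1"
  using assms
proof (induction s)
  case Nil then show ?case by simp
next
  case (Cons bt s)
  show ?case
  proof (cases "s = []")
    case True then show ?thesis by (cases "fst bt") (auto simp: xsof_def)
  next
    case False
    then have alt: "altl (map fst s)" and ne: "fst bt \<noteq> fst (hd s)"
      using Cons.prems by (auto simp: altl_Cons hd_map)
    note IH = Cons.IH[OF alt False]
    then show ?thesis using False ne
      by (cases "fst bt"; cases "fst (hd s)") (auto simp: xsof_def)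
  qed
qed

lemma nb_le:
  assumes "altl (map fst s)"
  shows "length (xsof TA s) \<le> length (xsof TB s) + 1"
proof (cases "s = []")
  case True then show ?thesis by (simp add: xsof_def)
next
  case False
  from nb_diff[OF assms False] show ?thesis by (auto split: if_splits)
qed

lemma bt_nonneg:
  assumes "kA v \<ge> 0" "kB v \<ge> 0" "tA v \<ge> 0" "tB v \<ge> 0"
  shows "batch_time kA kB tA tB v bt \<ge> 0"
  using assms by (cases bt; cases "fst bt") (auto simp: batch_time_def)

lemma time_A:
  "sum_list (map (batch_time kA kB tA tB v) (filter (\<lambda>bt. fst bt = TA) s)) =
   real (length (xsof TA s)) * tA v + kA v * sum_list (map (\<lambda>x. real x ^ 2) (xsof TA s))"
  unfolding xsof_def
  by (induction s) (auto simp: batch_time_def algebra_simps split: prod.splits)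

lemma time_B:
  "sum_list (map (batch_time kA kB tA tB v) (filter (\<lambda>bt. fst bt = TB) s)) =
   real (length (xsof TB s)) * tB v + kB v * sum_list (map (\<lambda>x. real x ^ 2) (xsof TB s))"
  unfolding xsof_def
  by (induction s) (auto simp: batch_time_def algebra_simps split: prod.splits jobtype.splits)

lemma time_split:
  "sched_time kA kB tA tB v s =
   real (length (xsof TA s)) * tA v + kA v * sum_list (map (\<lambda>x. real x ^ 2) (xsof TA s)) +
   (real (length (xsof TB s)) * tB v + kB v * sum_list (map (\<lambda>x. real x ^ 2) (xsof TB s)))"
  unfolding sched_time_def
  by (subst sum_split) (simp add: time_A time_B)

lemma sq_ge_len: "\<forall>x\<in>set xs. 0 < (x::nat) \<Longrightarrow> sum_list (map (\<lambda>x. real x ^ 2) xs) \<ge> real (length xs)"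
proof (induction xs)
  case Nil then show ?case by simp
next
  case (Cons x xs)
  then have h: "1 \<le> real x ^ 2" by (simp add: one_le_power)
  have IH: "real (length xs) \<le> sum_list (map (\<lambda>x. real x ^ 2) xs)" using Cons by simp
  show ?case using add_mono[OF h IH] by simp
qed

lemma sq_ones: "\<forall>x\<in>set xs. (x::nat) = 1 \<Longrightarrow> sum_list (map (\<lambda>x. real x ^ 2) xs) = real (length xs)"
  by (induction xs) auto

lemma sum_ones: "\<forall>x\<in>set xs. (x::nat) = 1 \<Longrightarrow> sum_list xs = length xs"
  by (induction xs) auto


definition reducible :: "jobtype \<Rightarrow> batch list \<Rightarrow> bool" where
  "reducible \<tau> s \<longleftrightarrow> (\<exists>bt\<in>set s. fst bt = \<tau> \<and> 2 \<le> snd bt) \<or>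
      (s \<noteq> [] \<and> fst (hd s) = \<tau>) \<or> (s \<noteq> [] \<and> fst (last s) = \<tau>)"

lemma bt_mono:
  assumes "kA v \<ge> 0" "kB v \<ge> 0"
  shows "batch_time kA kB tA tB v (\<tau>, x - 1) \<le> batch_time kA kB tA tB v (\<tau>, x)"
proof -
  have "real (x - 1) ^ 2 \<le> real x ^ 2" by (intro power_mono) auto
  then show ?thesis using assms
    by (cases \<tau>) (auto simp: batch_time_def intro: mult_left_mono)
qed

lemma xsof_append: "xsof \<sigma> (xs @ ys) = xsof \<sigma> xs @ xsof \<sigma> ys"
  by (simp add: xsof_def)

lemma xsof_Nil[simp]: "xsof \<sigma> [] = []"
  by (simp add: xsof_def)

lemma xsof_Cons: "xsof \<sigma> (bt # ys) = (if fst bt = \<sigma> then [snd bt] else []) @ xsof \<sigma> ys"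
  by (simp add: xsof_def)

lemma reduce:
  assumes nn: "kA v \<ge> 0" "kB v \<ge> 0" "tA v \<ge> 0" "tB v \<ge> 0"
    and pos: "\<forall>bt\<in>set s. 0 < snd bt" and alt: "altl (map fst s)"
    and red: "reducible \<tau> s"
  shows "\<exists>s'. (\<forall>bt\<in>set s'. 0 < snd bt) \<and> altl (map fst s') \<and>
     (\<forall>\<sigma>. sum_list (xsof \<sigma> s') + (if \<sigma> = \<tau> then 1 else 0) = sum_list (xsof \<sigma> s)) \<and>
     sched_time kA kB tA tB v s' \<le> sched_time kA kB tA tB v s"
proof (cases "\<exists>bt\<in>set s. fst bt = \<tau> \<and> 2 \<le> snd bt")
  case True
  then obtain bt where bt: "bt \<in> set s" "fst bt = \<tau>" "2 \<le> snd bt" by blast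
  then obtain xs ys where s: "s = xs @ bt # ys" by (meson split_list)
  obtain x where btx: "bt = (\<tau>, x)" using bt(2) by (metis prod.collapse)
  define s' where "s' = xs @ (\<tau>, x - 1) # ys"
  have "map fst s' = map fst s" by (simp add: s s'_def btx)
  moreover have "\<forall>bt\<in>set s'. 0 < snd bt" using pos bt by (auto simp: s s'_def btx)
  moreover have "\<forall>\<sigma>. sum_list (xsof \<sigma> s') + (if \<sigma> = \<tau> then 1 else 0) = sum_list (xsof \<sigma> s)"
    using bt by (auto simp: s s'_def btx xsof_append xsof_Cons)
  moreover have "sched_time kA kB tA tB v s' \<le> sched_time kA kB tA tB v s"
    using bt_mono[of kA v kB tA tB \<tau> x] nn
    by (simp add: sched_time_def s s'_def btx)
  ultimately show ?thesis using alt by metis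
next
  case False
  then have one: "\<forall>bt\<in>set s. fst bt = \<tau> \<longrightarrow> snd bt = 1" using pos by force
  show ?thesis
  proof (cases "s \<noteq> [] \<and> fst (hd s) = \<tau>")
    case True
    then obtain bt s0 where s: "s = bt # s0" by (cases s) auto
    have b1: "snd bt = 1" "fst bt = \<tau>" using one True s by auto
    have "\<forall>bt\<in>set s0. 0 < snd bt" using pos s by auto
    moreover have "altl (map fst s0)" using alt s altl_tl by auto
    moreover have "\<forall>\<sigma>. sum_list (xsof \<sigma> s0) + (if \<sigma> = \<tau> then 1 else 0) = sum_list (xsof \<sigma> s)"
      using b1 by (auto simp: s xsof_Cons)
    moreover have "sched_time kA kB tA tB v s0 \<le> sched_time kA kB tA tB v s"
      using bt_nonneg[of kA v kB tA tB bt] nn by (simp add: sched_time_def s)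
    ultimately show ?thesis by blast
  next
    case False
    with red \<open>\<not> (\<exists>bt\<in>set s. fst bt = \<tau> \<and> 2 \<le> snd bt)\<close>
    have "s \<noteq> [] \<and> fst (last s) = \<tau>" unfolding reducible_def by blast
    then obtain bt s0 where s: "s = s0 @ [bt]" "fst bt = \<tau>"
      by (metis append_butlast_last_id)
    have b1: "snd bt = 1" using one s by auto
    have "\<forall>bt\<in>set s0. 0 < snd bt" using pos s by auto
    moreover have "altl (map fst s0)" using alt s altl_prefix[of "map fst s0"] by auto
    moreover have "\<forall>\<sigma>. sum_list (xsof \<sigma> s0) + (if \<sigma> = \<tau> then 1 else 0) = sum_list (xsof \<sigma> s)"
      using b1 s by (auto simp: xsof_append xsof_Cons)
    moreover have "sched_time kA kB tA tB v s0 \<le> sched_time kA kB tA tB v s"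
      using bt_nonneg[of kA v kB tA tB bt] nn by (simp add: sched_time_def s)
    ultimately show ?thesis by blast
  qed
qed


lemma UNIV_jobtype: "(UNIV :: jobtype set) = {TA, TB}"
  using jobtype.exhaust by auto

lemma sum_snd: "sum_list (map snd s) = sum_list (xsof TA s) + sum_list (xsof TB s)"
  unfolding xsof_def using sum_split[of snd s] by simp

lemma finite_scheds: "finite {s. is_schedule a b s}"
proof -
  have "{s. is_schedule a b s} \<subseteq> {s. set s \<subseteq> (UNIV::jobtype set) \<times> {..a+b} \<and> length s \<le> a+b}"
  proof (clarify)
    fix s assume H: "is_schedule a b s"
    then have pos: "\<forall>bt\<in>set s. 0 < snd bt" and sm: "sum_list (map snd s) = a + b"
      by (auto simp: is_schedule_iff sum_snd)
    have "set s \<subseteq> UNIV \<times> {..a+b}"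
    proof
      fix bt assume "bt \<in> set s"
      then have "snd bt \<in> set (map snd s)" by simp
      then have "snd bt \<le> a + b" using member_le_sum_list[of "snd bt" "map snd s"] sm by simp
      then show "bt \<in> UNIV \<times> {..a+b}" by (cases bt) auto
    qed
    moreover have "length s \<le> a + b"
      using len_le_sum[of "map snd s"] pos sm by simp
    ultimately show "set s \<subseteq> UNIV \<times> {..a+b} \<and> length s \<le> a + b" by blast
  qed
  moreover have "finite {s. set s \<subseteq> (UNIV::jobtype set) \<times> {..a+b} \<and> length s \<le> a+b}"
    by (rule finite_lists_length_le) (simp add: UNIV_jobtype)
  ultimately show ?thesis by (rule finite_subset)
qed

lemma ex_sched: "\<exists>s. is_schedule a b s"
proof -
  define s where "s = (if a = 0 then [] else [(TA,a)]) @ (if b = 0 then [] else [(TB,b)])"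
  have "is_schedule a b s"
    unfolding is_schedule_iff s_def by (auto simp: xsof_def)
  then show ?thesis by blast
qed

lemma bset_iff:
  "b \<in> bset kA kB tA tB L v a \<longleftrightarrow> (\<exists>s. is_schedule a b s \<and> sched_time kA kB tA tB v s \<le> L)"
proof -
  have fin: "finite (sched_time kA kB tA tB v ` {s. is_schedule a b s})"
    using finite_scheds by simp
  have ne: "sched_time kA kB tA tB v ` {s. is_schedule a b s} \<noteq> {}"
    using ex_sched by auto
  show ?thesis unfolding bset_def fmin_def
    using Min_le_iff[OF fin ne] by auto
qed

fun inter :: "nat list \<Rightarrow> batch list" where
  "inter [] = []"
| "inter [x] = [(TA, x)]"
| "inter (x # y # zs) = (TA, x) # (TB, 1) # inter (y # zs)"

lemma inter_Cons_hd: "\<exists>r. inter (x # xs) = (TA, x) # r"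
  by (cases xs) auto

lemma inter_altl: "altl (map fst (inter xs))"
proof (induction xs rule: inter.induct)
  case (3 x y zs)
  obtain r where "inter (y # zs) = (TA, y) # r" using inter_Cons_hd by blast
  then show ?case using 3 by simp
qed auto

lemma inter_pos: "\<forall>x\<in>set xs. 0 < x \<Longrightarrow> \<forall>bt\<in>set (inter xs). 0 < snd bt"
  by (induction xs rule: inter.induct) auto

lemma inter_A: "xsof TA (inter xs) = xs"
  by (induction xs rule: inter.induct) (auto simp: xsof_Cons)

lemma inter_B: "xsof TB (inter xs) = replicate (length xs - 1) 1"
  by (induction xs rule: inter.induct) (auto simp: xsof_Cons)


lemma machine_min:
  assumes nn: "kA v \<ge> 0" "kB v \<ge> 0" "tA v \<ge> 0" "tB v \<ge> 0"
    and c: "c \<in> bset kA kB tA tB L v (Suc x)"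
  shows "\<exists>c'. c' \<le> c \<and> c' \<in> bset kA kB tA tB L v (Suc x) \<and> c' \<in> bset kA kB tA tB L v x"
proof -
  let ?B = "bset kA kB tA tB L v"
  define c0 where "c0 = (LEAST c. c \<in> ?B (Suc x))"
  have c0: "c0 \<in> ?B (Suc x)" "c0 \<le> c"
    using c unfolding c0_def by (auto intro: LeastI Least_le)
  then obtain s where s: "is_schedule (Suc x) c0 s" "sched_time kA kB tA tB v s \<le> L"
    using bset_iff by blast
  have pos: "\<forall>bt\<in>set s. 0 < snd bt" and alt: "altl (map fst s)"
    and sA: "sum_list (xsof TA s) = Suc x" and sB: "sum_list (xsof TB s) = c0"
    using s(1) by (auto simp: is_schedule_iff)
  have nred: "\<not> reducible TB s"
  proof
    assume "reducible TB s"
    from reduce[where kA=kA and kB=kB and tA=tA and tB=tB and v=v, OF nn pos alt this] obtain s' where s':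
      "\<forall>bt\<in>set s'. 0 < snd bt" "altl (map fst s')"
      "\<forall>\<sigma>. sum_list (xsof \<sigma> s') + (if \<sigma> = TB then 1 else 0) = sum_list (xsof \<sigma> s)"
      "sched_time kA kB tA tB v s' \<le> sched_time kA kB tA tB v s" by blast
    have "sum_list (xsof TA s') = Suc x" "sum_list (xsof TB s') + 1 = c0"
      using s'(3)[rule_format, of TA] s'(3)[rule_format, of TB] sA sB by auto
    then have "c0 - 1 \<in> ?B (Suc x)" "c0 - 1 < c0"
      using s' s(2) by (auto simp: bset_iff is_schedule_iff intro!: exI[of _ s'])
    then show False unfolding c0_def using not_less_Least by blast
  qed
  have "s \<noteq> []" using sA by auto
  then have "fst (hd s) = TA" using nred unfolding reducible_def using jt_cases by blast
  then have "reducible TA s" using \<open>s \<noteq> []\<close> unfolding reducible_def by blast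
  from reduce[where kA=kA and kB=kB and tA=tA and tB=tB and v=v, OF nn pos alt this] obtain s' where s':
      "\<forall>bt\<in>set s'. 0 < snd bt" "altl (map fst s')"
      "\<forall>\<sigma>. sum_list (xsof \<sigma> s') + (if \<sigma> = TA then 1 else 0) = sum_list (xsof \<sigma> s)"
      "sched_time kA kB tA tB v s' \<le> sched_time kA kB tA tB v s" by blast
  have "sum_list (xsof TA s') = x" "sum_list (xsof TB s') = c0"
    using s'(3)[rule_format, of TA] s'(3)[rule_format, of TB] sA sB by auto
  then have "c0 \<in> ?B x"
    using s' s(2) by (auto simp: bset_iff is_schedule_iff intro!: exI[of _ s'])
  then show ?thesis using c0 by blast
qed


lemma balanced:
  assumes y: "1 \<le> y" "y \<le> a"
  shows "\<exists>ps. length ps = y \<and> sum_list ps = a \<and> (\<forall>x\<in>set ps. 0 < x) \<and>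
     sum_list (map (\<lambda>x. real x ^ 2) ps) =
       (2 * real (a div y) + 1) * real a - real y * (real (a div y) * (real (a div y) + 1))"
proof -
  define q where "q = a div y"
  define r where "r = a mod y"
  have a: "a = y * q + r" unfolding q_def r_def by simp
  have ry: "r < y" unfolding r_def using y by simp
  have q1: "1 \<le> q" unfolding q_def using y div_le_mono[of y a y] by simp
  define ps where "ps = replicate r (Suc q) @ replicate (y - r) q"
  have "length ps = y" using ry by (simp add: ps_def)
  moreover have "sum_list ps = a" using ry a
    by (simp add: ps_def sum_list_replicate algebra_simps)
  moreover have "\<forall>x\<in>set ps. 0 < x" using q1 by (auto simp: ps_def)
  moreover have "sum_list (map (\<lambda>x. real x ^ 2) ps) =
       (2 * real q + 1) * real a - real y * (real q * (real q + 1))"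
  proof -
    have "sum_list (map (\<lambda>x. real x ^ 2) ps) = real r * (real q + 1) ^ 2 + real (y - r) * real q ^ 2"
      by (simp add: ps_def sum_list_replicate)
    also have "real (y - r) = real y - real r" using ry by simp
    also have "real a = real y * real q + real r" using a by simp
    ultimately show ?thesis by (simp add: algebra_simps power2_eq_square)
  qed
  ultimately show ?thesis unfolding q_def by blast
qed


lemma machine_step:
  assumes nn: "kA v \<ge> 0" "kB v \<ge> 0" "tA v \<ge> 0" "tB v \<ge> 0"
    and lt: "y1 < y" and y1: "y1 \<in> bset kA kB tA tB L v a" and yy: "y \<in> bset kA kB tA tB L v a"
  shows "y - 1 \<in> bset kA kB tA tB L v a"
proof -
  let ?ST = "sched_time kA kB tA tB v"
  obtain s where s: "is_schedule a y s" "?ST s \<le> L" using yy bset_iff by blast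
  obtain s1 where s1: "is_schedule a y1 s1" "?ST s1 \<le> L" using y1 bset_iff by blast
  have pos: "\<forall>bt\<in>set s. 0 < snd bt" and alt: "altl (map fst s)"
    and sA: "sum_list (xsof TA s) = a" and sB: "sum_list (xsof TB s) = y"
    using s(1) by (auto simp: is_schedule_iff)
  have pos1: "\<forall>bt\<in>set s1. 0 < snd bt" and alt1: "altl (map fst s1)"
    and sA1: "sum_list (xsof TA s1) = a" and sB1: "sum_list (xsof TB s1) = y1"
    using s1(1) by (auto simp: is_schedule_iff)
  show ?thesis
  proof (cases "reducible TB s")
    case True
    from reduce[where kA=kA and kB=kB and tA=tA and tB=tB and v=v, OF nn pos alt this]
    obtain s' where s':
      "\<forall>bt\<in>set s'. 0 < snd bt" "altl (map fst s')"
      "\<forall>\<sigma>. sum_list (xsof \<sigma> s') + (if \<sigma> = TB then 1 else 0) = sum_list (xsof \<sigma> s)"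
      "?ST s' \<le> ?ST s" by blast
    have "sum_list (xsof TA s') = a" "sum_list (xsof TB s') = y - 1"
      using s'(3)[rule_format, of TA] s'(3)[rule_format, of TB] sA sB by auto
    then show ?thesis
      using s' s(2) by (auto simp: bset_iff is_schedule_iff intro!: exI[of _ s'])
  next
    case False
    have one: "\<forall>x\<in>set (xsof TB s). x = 1"
      using False pos unfolding reducible_def xsof_def by force
    have "s \<noteq> []" using sB lt by auto
    then have hl: "fst (hd s) = TA" "fst (last s) = TA"
      using False unfolding reducible_def using jt_cases by blast+
    from nb_diff[OF alt \<open>s \<noteq> []\<close>] hl
    have nA: "length (xsof TA s) = length (xsof TB s) + 1" by simp
    have nB: "length (xsof TB s) = y" using sum_ones[OF one] sB by simp
    have SB: "sum_list (map (\<lambda>x. real x ^ 2) (xsof TB s)) = real y"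
      using sq_ones[OF one] nB by simp
    have posA: "\<forall>x\<in>set (xsof TA s). 0 < x" using pos by (auto simp: xsof_def)
    have "y + 1 \<le> a" using len_le_sum[OF posA] nA nB sA by simp
    have y1': "1 \<le> y" "y \<le> a" using lt \<open>y + 1 \<le> a\<close> by auto
    have posB1: "\<forall>x\<in>set (xsof TB s1). 0 < x" using pos1 by (auto simp: xsof_def)
    have posA1: "\<forall>x\<in>set (xsof TA s1). 0 < x" using pos1 by (auto simp: xsof_def)
    define nA1 where "nA1 = length (xsof TA s1)"
    define nB1 where "nB1 = length (xsof TB s1)"
    have "nB1 \<le> y1" using len_le_sum[OF posB1] sB1 by (simp add: nB1_def)
    have "nA1 \<le> nB1 + 1" using nb_le[OF alt1] by (simp add: nA1_def nB1_def)
    have nA1y: "nA1 \<le> y" using \<open>nB1 \<le> y1\<close> \<open>nA1 \<le> nB1 + 1\<close> lt by simp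
    have SB1: "sum_list (map (\<lambda>x. real x ^ 2) (xsof TB s1)) \<ge> real nB1"
      using sq_ge_len[OF posB1] by (simp add: nB1_def)
    define q where "q = a div y"
    define Q0 where "Q0 = (2 * real q + 1) * real a - real y * (real q * (real q + 1))"
    define D where "D = real q * (real q + 1)"
    obtain ps where ps: "length ps = y" "sum_list ps = a" "\<forall>x\<in>set ps. 0 < x"
      "sum_list (map (\<lambda>x. real x ^ 2) ps) = Q0"
      using balanced[OF y1'] unfolding Q0_def q_def by blast
    have sch: "is_schedule a (y - 1) (inter ps)"
      using ps inter_altl inter_pos[OF ps(3)]
      by (simp add: is_schedule_iff inter_A inter_B sum_list_replicate)
    have Tt: "?ST (inter ps) = real y * tA v + kA v * Q0 + (real y - 1) * (tB v + kB v)"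
      using ps y1' by (simp add: time_split inter_A inter_B sum_list_replicate algebra_simps)
    have SA: "sum_list (map (\<lambda>x. real x ^ 2) (xsof TA s)) \<ge> Q0 - D"
      using sum_sq_bound[of q "xsof TA s"] nA nB sA unfolding Q0_def D_def
      by (simp add: algebra_simps)
    have SA1: "sum_list (map (\<lambda>x. real x ^ 2) (xsof TA s1)) \<ge> Q0 + (real y - real nA1) * D"
      using sum_sq_bound[of q "xsof TA s1"] sA1 unfolding Q0_def D_def nA1_def
      by (simp add: algebra_simps)
    have Ts: "?ST s \<ge> ?ST (inter ps) + (tA v + tB v + kB v) - kA v * D"
    proof -
      have "?ST s = real (y + 1) * tA v + kA v * sum_list (map (\<lambda>x. real x ^ 2) (xsof TA s))
                   + (real y * tB v + kB v * real y)"
        using time_split[of kA kB tA tB v s] nA nB SB by simp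
      moreover have "kA v * sum_list (map (\<lambda>x. real x ^ 2) (xsof TA s)) \<ge> kA v * (Q0 - D)"
        using SA nn(1) by (rule mult_left_mono)
      ultimately show ?thesis using Tt by (simp add: algebra_simps)
    qed
    have Ts1: "?ST s1 \<ge> ?ST (inter ps) + (real y - real nA1) * (kA v * D - (tA v + tB v + kB v))"
    proof -
      have e: "?ST s1 = real nA1 * tA v + kA v * sum_list (map (\<lambda>x. real x ^ 2) (xsof TA s1))
                   + (real nB1 * tB v + kB v * sum_list (map (\<lambda>x. real x ^ 2) (xsof TB s1)))"
        using time_split[of kA kB tA tB v s1] by (simp add: nA1_def nB1_def)
      have i1: "kA v * sum_list (map (\<lambda>x. real x ^ 2) (xsof TA s1)) \<ge> kA v * (Q0 + (real y - real nA1) * D)"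
        using SA1 nn(1) by (rule mult_left_mono)
      have i2: "kB v * sum_list (map (\<lambda>x. real x ^ 2) (xsof TB s1)) \<ge> kB v * real nB1"
        using SB1 nn(2) by (rule mult_left_mono)
      have "real nB1 \<ge> real nA1 - 1" using \<open>nA1 \<le> nB1 + 1\<close> by simp
      then have i3: "real nB1 * (tB v + kB v) \<ge> (real nA1 - 1) * (tB v + kB v)"
        using nn by (intro mult_right_mono) auto
      show ?thesis using e i1 i2 i3 Tt by (simp add: algebra_simps)
    qed
    have "?ST (inter ps) \<le> L"
    proof (cases "kA v * D \<ge> tA v + tB v + kB v")
      case True
      have "(real y - real nA1) * (kA v * D - (tA v + tB v + kB v)) \<ge> 0"
        using True nA1y by (intro mult_nonneg_nonneg) auto
      then show ?thesis using Ts1 s1(2) by linarith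
    next
      case False
      then show ?thesis using Ts s(2) by linarith
    qed
    then show ?thesis using sch bset_iff by blast
  qed
qed


definition intv :: "nat set \<Rightarrow> bool" where
  "intv S \<longleftrightarrow> (\<forall>c1 c2 c3. c1 < c2 \<and> c2 < c3 \<and> c1 \<in> S \<and> c3 \<in> S \<longrightarrow> c2 \<in> S)"

definition mono_min :: "(nat \<Rightarrow> nat set) \<Rightarrow> bool" where
  "mono_min D \<longleftrightarrow> (\<forall>a c. c \<in> D (Suc a) \<longrightarrow> (\<exists>c'. c' \<le> c \<and> c' \<in> D (Suc a) \<and> c' \<in> D a))"

definition sumset :: "nat set \<Rightarrow> nat set \<Rightarrow> nat set" where
  "sumset A B = {d + e | d e. d \<in> A \<and> e \<in> B}"

definition comb :: "(nat \<Rightarrow> nat set) \<Rightarrow> (nat \<Rightarrow> nat set) \<Rightarrow> nat \<Rightarrow> nat set" where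
  "comb D1 D2 a = (\<Union>x\<in>{..a}. sumset (D1 (a - x)) (D2 x))"

lemma intv_between: "intv S \<Longrightarrow> x \<in> S \<Longrightarrow> z \<in> S \<Longrightarrow> x \<le> y \<Longrightarrow> y \<le> z \<Longrightarrow> y \<in> S"
proof -
  assume a: "intv S" "x \<in> S" "z \<in> S" "x \<le> y" "y \<le> z"
  show "y \<in> S"
  proof (cases "x = y \<or> y = z")
    case True then show ?thesis using a by auto
  next
    case False then have "x < y" "y < z" using a by auto
    then show ?thesis using a unfolding intv_def by blast
  qed
qed

lemma intv_step: "(\<And>y1 y. y1 < y \<Longrightarrow> y1 \<in> S \<Longrightarrow> y \<in> S \<Longrightarrow> y - 1 \<in> S) \<Longrightarrow> intv S"
proof -
  assume H: "\<And>y1 y. y1 < y \<Longrightarrow> y1 \<in> S \<Longrightarrow> y \<in> S \<Longrightarrow> y - 1 \<in> S"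
  have "\<forall>c3. c3 - c2 = k \<longrightarrow> c1 < c2 \<and> c2 < c3 \<and> c1 \<in> S \<and> c3 \<in> S \<longrightarrow> c2 \<in> S" for k c1 c2
  proof (induction k)
    case 0 then show ?case by auto
  next
    case (Suc k)
    show ?case
    proof (intro allI impI)
      fix c3 assume a: "c3 - c2 = Suc k" "c1 < c2 \<and> c2 < c3 \<and> c1 \<in> S \<and> c3 \<in> S"
      then have m: "c3 - 1 \<in> S" using H[of c1 c3] by auto
      show "c2 \<in> S"
      proof (cases "c2 = c3 - 1")
        case True then show ?thesis using m by simp
      next
        case False
        then show ?thesis using Suc.IH[rule_format, of "c3 - 1"] a m by auto
      qed
    qed
  qed
  then show "intv S" unfolding intv_def by blast
qed

lemma intv_sumset: "intv A \<Longrightarrow> intv B \<Longrightarrow> intv (sumset A B)"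
  unfolding intv_def
proof (intro allI impI)
  fix c1 c2 c3
  assume iA: "\<forall>c1 c2 c3. c1 < c2 \<and> c2 < c3 \<and> c1 \<in> A \<and> c3 \<in> A \<longrightarrow> c2 \<in> A"
    and iB: "\<forall>c1 c2 c3. c1 < c2 \<and> c2 < c3 \<and> c1 \<in> B \<and> c3 \<in> B \<longrightarrow> c2 \<in> B"
    and H: "c1 < c2 \<and> c2 < c3 \<and> c1 \<in> sumset A B \<and> c3 \<in> sumset A B"
  have iA': "intv A" and iB': "intv B" using iA iB unfolding intv_def by blast+
  obtain d1 e1 where 1: "c1 = d1 + e1" "d1 \<in> A" "e1 \<in> B" using H unfolding sumset_def by blast
  obtain d3 e3 where 3: "c3 = d3 + e3" "d3 \<in> A" "e3 \<in> B" using H unfolding sumset_def by blast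
  show "c2 \<in> sumset A B"
  proof (cases "c2 \<le> d1 + e3")
    case True
    have "c2 - d1 \<in> B" using intv_between[OF iB' 1(3) 3(3)] True H 1 by auto
    moreover have "c2 = d1 + (c2 - d1)" using H 1 by auto
    ultimately show ?thesis using 1 unfolding sumset_def by blast
  next
    case False
    have "c2 - e3 \<in> A" using intv_between[OF iA' 1(2) 3(2)] False H 3 by auto
    moreover have "c2 = (c2 - e3) + e3" using False by auto
    ultimately show ?thesis using 3 unfolding sumset_def by blast
  qed
qed

lemma intv_Un:
  assumes iA: "intv A" and iB: "intv B" and z: "z \<in> A" "z \<in> B"
  shows "intv (A \<union> B)"
  unfolding intv_def
proof (intro allI impI)
  fix c1 c2 c3 assume H: "c1 < c2 \<and> c2 < c3 \<and> c1 \<in> A \<union> B \<and> c3 \<in> A \<union> B"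
  show "c2 \<in> A \<union> B"
  proof (cases "c2 \<le> z")
    case True
    have "c2 \<in> A" if "c1 \<in> A" using intv_between[OF iA that z(1)] H True by auto
    moreover have "c2 \<in> B" if "c1 \<in> B" using intv_between[OF iB that z(2)] H True by auto
    ultimately show ?thesis using H by blast
  next
    case False
    have "c2 \<in> A" if "c3 \<in> A" using intv_between[OF iA z(1) that] H False by auto
    moreover have "c2 \<in> B" if "c3 \<in> B" using intv_between[OF iB z(2) that] H False by auto
    ultimately show ?thesis using H by blast
  qed
qed

lemma intv_chain:
  assumes I: "\<And>x. intv (I x)" and C: "\<And>x. lo \<le> x \<Longrightarrow> x < n \<Longrightarrow> I x \<inter> I (Suc x) \<noteq> {}"
    and n: "lo \<le> n"
  shows "intv (\<Union>x\<in>{lo..n}. I x)"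
  using n C
proof (induction n rule: dec_induct)
  case base then show ?case using I by simp
next
  case (step n)
  have e: "(\<Union>x\<in>{lo..Suc n}. I x) = (\<Union>x\<in>{lo..n}. I x) \<union> I (Suc n)"
    using step.hyps(1) by (simp add: atLeastAtMostSuc_conv Un_commute)
  have IH: "intv (\<Union>x\<in>{lo..n}. I x)" using step by auto
  obtain z where z: "z \<in> I n" "z \<in> I (Suc n)" using step.prems[of n] step.hyps by auto
  have "z \<in> (\<Union>x\<in>{lo..n}. I x)" using z step.hyps by auto
  then show ?case unfolding e using intv_Un[OF IH I _ z(2)] by blast
qed


lemma nonempty_down:
  assumes m: "mono_min D" and ne: "D (i + k) \<noteq> {}"
  shows "D i \<noteq> {}"
  using ne
proof (induction k)
  case 0 then show ?case by simp
next
  case (Suc k)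
  then obtain c where "c \<in> D (Suc (i + k))" by auto
  then have "D (i + k) \<noteq> {}" using m unfolding mono_min_def by blast
  then show ?case using Suc.IH by blast
qed

lemma nonempty_le: "mono_min D \<Longrightarrow> D j \<noteq> {} \<Longrightarrow> i \<le> j \<Longrightarrow> D i \<noteq> {}"
  using nonempty_down[of D i "j - i"] by simp

lemma comb_intv:
  assumes i1: "\<And>a. intv (D1 a)" and i2: "\<And>x. intv (D2 x)"
    and m1: "mono_min D1" and m2: "mono_min D2"
  shows "intv (comb D1 D2 a)"
  unfolding intv_def
proof (intro allI impI)
  fix c1 c2 c3
  assume H: "c1 < c2 \<and> c2 < c3 \<and> c1 \<in> comb D1 D2 a \<and> c3 \<in> comb D1 D2 a"
  define I where "I x = sumset (D1 (a - x)) (D2 x)" for x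
  obtain x1 where x1: "x1 \<le> a" "c1 \<in> I x1" using H unfolding comb_def I_def by auto
  obtain x3 where x3: "x3 \<le> a" "c3 \<in> I x3" using H unfolding comb_def I_def by auto
  have ne: "D1 (a - x) \<noteq> {} \<and> D2 x \<noteq> {}" if "x = x1 \<or> x = x3" for x
    using that x1 x3 unfolding I_def sumset_def by auto
  define lo where "lo = min x1 x3"
  define hi where "hi = max x1 x3"
  have lohi: "lo \<le> hi" "hi \<le> a" using x1 x3 unfolding lo_def hi_def by auto
  have neD2: "D2 hi \<noteq> {}" using ne[of hi] unfolding hi_def by (simp add: max_def)
  have neD1: "D1 (a - lo) \<noteq> {}" using ne[of lo] unfolding lo_def by (simp add: min_def)
  have C: "I x \<inter> I (Suc x) \<noteq> {}" if "lo \<le> x" "x < hi" for x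
  proof -
    have "D2 (Suc x) \<noteq> {}" using nonempty_le[OF m2 neD2] that by simp
    then obtain e where e: "e \<in> D2 (Suc x)" by auto
    then obtain e' where e': "e' \<in> D2 (Suc x)" "e' \<in> D2 x"
      using m2 unfolding mono_min_def by blast
    have "D1 (a - x) \<noteq> {}" using nonempty_le[OF m1 neD1] that by simp
    then obtain d where d: "d \<in> D1 (a - x)" by auto
    have ax: "a - x = Suc (a - Suc x)" using that lohi by simp
    obtain d' where d': "d' \<in> D1 (a - x)" "d' \<in> D1 (a - Suc x)"
      using m1 d unfolding mono_min_def ax by blast
    have "d' + e' \<in> I x" "d' + e' \<in> I (Suc x)"
      unfolding I_def sumset_def using d' e' by blast+
    then show ?thesis by blast
  qed
  have iv: "intv (\<Union>x\<in>{lo..hi}. I x)"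
    using intv_chain[of I lo hi] C lohi(1) intv_sumset i1 i2 unfolding I_def by blast
  have "c1 \<in> (\<Union>x\<in>{lo..hi}. I x)" "c3 \<in> (\<Union>x\<in>{lo..hi}. I x)"
    using x1 x3 unfolding lo_def hi_def by auto
  then have "c2 \<in> (\<Union>x\<in>{lo..hi}. I x)" using iv H unfolding intv_def by blast
  then show "c2 \<in> comb D1 D2 a" unfolding comb_def I_def using lohi by auto
qed

lemma comb_mono:
  assumes m1: "mono_min D1" and m2: "mono_min D2"
  shows "mono_min (comb D1 D2)"
  unfolding mono_min_def
proof (intro allI impI)
  fix a c assume "c \<in> comb D1 D2 (Suc a)"
  then obtain x d e where x: "x \<le> Suc a" "c = d + e" "d \<in> D1 (Suc a - x)" "e \<in> D2 x"
    unfolding comb_def sumset_def by blast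
  show "\<exists>c'. c' \<le> c \<and> c' \<in> comb D1 D2 (Suc a) \<and> c' \<in> comb D1 D2 a"
  proof (cases x)
    case 0
    then obtain d' where d': "d' \<le> d" "d' \<in> D1 (Suc a)" "d' \<in> D1 a"
      using m1 x unfolding mono_min_def by auto
    have "d' + e \<in> comb D1 D2 (Suc a)" "d' + e \<in> comb D1 D2 a"
      unfolding comb_def sumset_def using d' x 0 by force+
    moreover have "d' + e \<le> c" using d' x by simp
    ultimately show ?thesis by blast
  next
    case (Suc x')
    then obtain e' where e': "e' \<le> e" "e' \<in> D2 (Suc x')" "e' \<in> D2 x'"
      using m2 x unfolding mono_min_def by auto
    have "d + e' \<in> comb D1 D2 (Suc a)"
      unfolding comb_def sumset_def using e' x Suc by force
    moreover have "d + e' \<in> comb D1 D2 a"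
    proof -
      have "Suc a - x = a - x'" "x' \<le> a" using Suc x by auto
      then show ?thesis unfolding comb_def sumset_def using e' x by force
    qed
    moreover have "d + e' \<le> c" using e' x by simp
    ultimately show ?thesis by blast
  qed
qed


lemma dp_0: "dp kA kB tA tB L 0 a = (if a = 0 then {0} else {})"
  unfolding dp_def by auto

lemma dp_Suc: "dp kA kB tA tB L (Suc v) a = comb (dp kA kB tA tB L v) (bset kA kB tA tB L (Suc v)) a"
proof
  show "dp kA kB tA tB L (Suc v) a \<subseteq> comb (dp kA kB tA tB L v) (bset kA kB tA tB L (Suc v)) a"
  proof
    fix c assume "c \<in> dp kA kB tA tB L (Suc v) a"
    then obtain x y where xy: "(\<Sum>i=1..Suc v. x i) = a" "c = (\<Sum>i=1..Suc v. y i)"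
      "\<forall>i\<in>{1..Suc v}. y i \<in> bset kA kB tA tB L i (x i)"
      unfolding dp_def by blast
    have sx: "(\<Sum>i=1..v. x i) + x (Suc v) = a" using xy(1) by (simp add: sum.cl_ivl_Suc)
    have sy: "c = (\<Sum>i=1..v. y i) + y (Suc v)" using xy(2) by (simp add: sum.cl_ivl_Suc)
    have "(\<Sum>i=1..v. y i) \<in> dp kA kB tA tB L v (a - x (Suc v))"
      unfolding dp_def using sx xy(3) by force
    moreover have "y (Suc v) \<in> bset kA kB tA tB L (Suc v) (x (Suc v))" using xy(3) by simp
    moreover have "x (Suc v) \<le> a" using sx by simp
    ultimately show "c \<in> comb (dp kA kB tA tB L v) (bset kA kB tA tB L (Suc v)) a"
      unfolding comb_def sumset_def using sy by blast
  qed
next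
  show "comb (dp kA kB tA tB L v) (bset kA kB tA tB L (Suc v)) a \<subseteq> dp kA kB tA tB L (Suc v) a"
  proof
    fix c assume "c \<in> comb (dp kA kB tA tB L v) (bset kA kB tA tB L (Suc v)) a"
    then obtain x0 d e where c: "x0 \<le> a" "c = d + e" "d \<in> dp kA kB tA tB L v (a - x0)"
      "e \<in> bset kA kB tA tB L (Suc v) x0"
      unfolding comb_def sumset_def by blast
    then obtain x y where xy: "(\<Sum>i=1..v. x i) = a - x0" "d = (\<Sum>i=1..v. y i)"
      "\<forall>i\<in>{1..v}. y i \<in> bset kA kB tA tB L i (x i)"
      unfolding dp_def by blast
    define x' where "x' = x(Suc v := x0)"
    define y' where "y' = y(Suc v := e)"
    have s1: "(\<Sum>i=1..v. x' i) = (\<Sum>i=1..v. x i)" unfolding x'_def by (intro sum.cong) auto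
    have s2: "(\<Sum>i=1..v. y' i) = (\<Sum>i=1..v. y i)" unfolding y'_def by (intro sum.cong) auto
    have "(\<Sum>i=1..Suc v. x' i) = a" using s1 xy(1) c(1) by (simp add: sum.cl_ivl_Suc x'_def)
    moreover have "c = (\<Sum>i=1..Suc v. y' i)" using s2 xy(2) c(2) by (simp add: sum.cl_ivl_Suc y'_def)
    moreover have "\<forall>i\<in>{1..Suc v}. y' i \<in> bset kA kB tA tB L i (x' i)"
      using xy(3) c(4) by (auto simp: x'_def y'_def le_Suc_eq)
    ultimately show "c \<in> dp kA kB tA tB L (Suc v) a" unfolding dp_def by blast
  qed
qed

lemma bset_props:
  assumes nn: "kA v \<ge> 0" "kB v \<ge> 0" "tA v \<ge> 0" "tB v \<ge> 0"
  shows "(\<forall>a. intv (bset kA kB tA tB L v a)) \<and> mono_min (bset kA kB tA tB L v)"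
proof
  show "\<forall>a. intv (bset kA kB tA tB L v a)"
    using machine_step[where kA=kA and kB=kB and tA=tA and tB=tB and v=v, OF nn]
    by (blast intro: intv_step)
  show "mono_min (bset kA kB tA tB L v)"
    unfolding mono_min_def
    using machine_min[where kA=kA and kB=kB and tA=tA and tB=tB and v=v, OF nn] by blast
qed

lemma dp_props:
  assumes nn: "\<forall>v\<in>{1..p}. kA v \<ge> 0 \<and> kB v \<ge> 0 \<and> tA v \<ge> 0 \<and> tB v \<ge> 0"
  shows "v \<le> p \<Longrightarrow> (\<forall>a. intv (dp kA kB tA tB L v a)) \<and> mono_min (dp kA kB tA tB L v)"
proof (induction v)
  case 0
  show ?case unfolding dp_0 intv_def mono_min_def by auto
next
  case (Suc v)
  then have IH: "(\<forall>a. intv (dp kA kB tA tB L v a)) \<and> mono_min (dp kA kB tA tB L v)" by simp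
  have "kA (Suc v) \<ge> 0" "kB (Suc v) \<ge> 0" "tA (Suc v) \<ge> 0" "tB (Suc v) \<ge> 0"
    using nn Suc.prems by auto
  from bset_props[where L=L and kA=kA and kB=kB and tA=tA and tB=tB and v="Suc v", OF this] have B:
    "(\<forall>a. intv (bset kA kB tA tB L (Suc v) a)) \<and> mono_min (bset kA kB tA tB L (Suc v))" .
  have "dp kA kB tA tB L (Suc v) = comb (dp kA kB tA tB L v) (bset kA kB tA tB L (Suc v))"
    using dp_Suc by blast
  then show ?case using comb_intv comb_mono IH B by metis
qed

theorem theorem3:
  fixes p :: nat and kA kB tA tB :: "nat \<Rightarrow> real" and L :: real
  assumes "p \<ge> 1"
    and "\<forall>v\<in>{1..p}. kA v \<ge> 0 \<and> kB v \<ge> 0 \<and> tA v \<ge> 0 \<and> tB v \<ge> 0"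
  shows "\<forall>v\<in>{1..p}. \<forall>a :: nat. \<forall>c1 c2 c3 :: int.
           c1 < c2 \<and> c2 < c3 \<and> c1 \<in> int ` dp kA kB tA tB L v a \<and> c3 \<in> int ` dp kA kB tA tB L v a
           \<longrightarrow> c2 \<in> int ` dp kA kB tA tB L v a"
proof (intro ballI allI impI)
  fix v a and c1 c2 c3 :: int
  assume v: "v \<in> {1..p}"
    and H: "c1 < c2 \<and> c2 < c3 \<and> c1 \<in> int ` dp kA kB tA tB L v a \<and> c3 \<in> int ` dp kA kB tA tB L v a"
  have iv: "intv (dp kA kB tA tB L v a)" using dp_props[OF assms(2)] v by auto
  obtain n1 n3 where n: "c1 = int n1" "n1 \<in> dp kA kB tA tB L v a"
    "c3 = int n3" "n3 \<in> dp kA kB tA tB L v a" using H by blast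
  have c2: "c2 = int (nat c2)" using H n by simp
  have "n1 < nat c2" "nat c2 < n3" using H n c2 by linarith+
  then have "nat c2 \<in> dp kA kB tA tB L v a" using iv n unfolding intv_def by blast
  then show "c2 \<in> int ` dp kA kB tA tB L v a" using c2 by blast
qed

end
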